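(* Let $G$ be an $\varepsilon$-graph with finite vertex set $\mathcal{V}\subset\mathbb{R}^K$. Then for all $x,y\in\mathcal{V}$, $$\tfrac14\,\varepsilon\,\big(d_{G,SP}(x,y)-1\big)\le d_{G,E}(x,y)\le\varepsilon\,d_{G,SP}(x,y).$$
   Context: The $\varepsilon$-graph on $\mathcal{V}$ joins distinct $x,y$ iff $\|x-y\|\le\varepsilon$. For a path $p=(v_0,\dots,v_l)$ in $G$ let $l=|p|$ be its number of edges. $d_{G,SP}(x,y)=\min_p|p|$ and $d_{G,E}(x,y)=\min_p\sum_{i=1}^{|p|}\|v_{i-1}-v_i\|$, minima over paths from $x$ to $y$ (the graph is assumed connected so these are finite). *)

theory Defs
  imports "HOL-Analysis.Analysis"
begin

definition eps_adj :: "real \<Rightarrow> 'a::real_normed_vector set \<Rightarrow> 'a \<Rightarrow> 'a \<Rightarrow> bool" where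
  "eps_adj eps V x y \<longleftrightarrow> x \<in> V \<and> y \<in> V \<and> x \<noteq> y \<and> norm (x - y) \<le> eps"

definition eps_path :: "real \<Rightarrow> 'a::real_normed_vector set \<Rightarrow> 'a list \<Rightarrow> bool" where
  "eps_path eps V p \<longleftrightarrow> p \<noteq> [] \<and> set p \<subseteq> V \<and>
     (\<forall>i < length p - 1. eps_adj eps V (p ! i) (p ! Suc i))"

definition eps_paths :: "real \<Rightarrow> 'a::real_normed_vector set \<Rightarrow> 'a \<Rightarrow> 'a \<Rightarrow> 'a list set" where
  "eps_paths eps V x y = {p. eps_path eps V p \<and> hd p = x \<and> last p = y}"

definition path_len :: "'a list \<Rightarrow> nat" where
  "path_len p = length p - 1"

definition path_eucl_len :: "'a::real_normed_vector list \<Rightarrow> real" where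
  "path_eucl_len p = (\<Sum>i < length p - 1. norm (p ! i - p ! Suc i))"

definition d_SP :: "real \<Rightarrow> 'a::real_normed_vector set \<Rightarrow> 'a \<Rightarrow> 'a \<Rightarrow> nat" where
  "d_SP eps V x y = (INF p \<in> eps_paths eps V x y. path_len p)"

definition d_E :: "real \<Rightarrow> 'a::real_normed_vector set \<Rightarrow> 'a \<Rightarrow> 'a \<Rightarrow> real" where
  "d_E eps V x y = (INF p \<in> eps_paths eps V x y. path_eucl_len p)"

definition eps_graph_connected :: "real \<Rightarrow> 'a::real_normed_vector set \<Rightarrow> bool" where
  "eps_graph_connected eps V \<longleftrightarrow> (\<forall>x\<in>V. \<forall>y\<in>V. eps_paths eps V x y \<noteq> {})"

end

theory Submission
  imports Defs
begin

fun okw :: "real \<Rightarrow> 'a::real_normed_vector set \<Rightarrow> 'a list \<Rightarrow> bool" where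
  "okw e V [] = False"
| "okw e V [a] = (a \<in> V)"
| "okw e V (a#b#r) = (a \<in> V \<and> norm (a - b) \<le> e \<and> okw e V (b#r))"

fun el :: "'a::real_normed_vector list \<Rightarrow> real" where
  "el [] = 0"
| "el [a] = 0"
| "el (a#b#r) = norm (a - b) + el (b#r)"

lemma el_nonneg: "el w \<ge> 0"
  by (induction w rule: el.induct) auto

lemma eps_path_single: "eps_path e V [a] \<longleftrightarrow> a \<in> V"
  by (simp add: eps_path_def)

lemma eps_path_Cons2:
  "eps_path e V (a#b#r) \<longleftrightarrow> eps_adj e V a b \<and> eps_path e V (b#r)"
proof
  assume h: "eps_path e V (a#b#r)"
  have "eps_adj e V a b" using h unfolding eps_path_def by (metis length_Cons nth_Cons_0 nth_Cons_Suc diff_Suc_1 zero_less_Suc)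
  moreover have "eps_path e V (b#r)" unfolding eps_path_def
  proof (intro conjI allI impI)
    show "set (b # r) \<subseteq> V" using h unfolding eps_path_def by auto
    fix i assume "i < length (b # r) - 1"
    then have "Suc i < length (a#b#r) - 1" by simp
    then have "eps_adj e V ((a#b#r) ! Suc i) ((a#b#r) ! Suc (Suc i))" using h unfolding eps_path_def by blast
    then show "eps_adj e V ((b # r) ! i) ((b # r) ! Suc i)" by simp
  qed simp
  ultimately show "eps_adj e V a b \<and> eps_path e V (b#r)" by blast
next
  assume h: "eps_adj e V a b \<and> eps_path e V (b#r)"
  show "eps_path e V (a#b#r)" unfolding eps_path_def
  proof (intro conjI allI impI)
    show "set (a # b # r) \<subseteq> V" using h unfolding eps_path_def eps_adj_def by auto
    fix i assume i: "i < length (a # b # r) - 1"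
    show "eps_adj e V ((a # b # r) ! i) ((a # b # r) ! Suc i)"
    proof (cases i)
      case 0 then show ?thesis using h by simp
    next
      case (Suc j)
      then have "j < length (b#r) - 1" using i by simp
      then have "eps_adj e V ((b#r) ! j) ((b#r) ! Suc j)" using h unfolding eps_path_def by blast
      then show ?thesis using Suc by simp
    qed
  qed simp
qed

lemma eucl_el: "path_eucl_len p = el p"
proof (induction p rule: el.induct)
  case (3 a b r)
  have "path_eucl_len (a#b#r) = (\<Sum>i<Suc (length r). norm ((a#b#r) ! i - (a#b#r) ! Suc i))"
    by (simp add: path_eucl_len_def)
  also have "\<dots> = norm (a - b) + (\<Sum>i<length r. norm ((b#r) ! i - (b#r) ! Suc i))"
    by (subst sum.lessThan_Suc_shift) simp
  also have "\<dots> = norm (a - b) + path_eucl_len (b#r)" by (simp add: path_eucl_len_def)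
  finally show ?case using 3 by simp
qed (auto simp: path_eucl_len_def)

lemma path_okw: "eps_path e V p \<Longrightarrow> okw e V p"
  by (induction p rule: okw.induct) (auto simp: eps_path_single eps_path_Cons2 eps_adj_def, simp add: eps_path_def)

lemma path_el: "eps_path e V p \<Longrightarrow> el p \<le> e * real (length p - 1)"
proof (induction p rule: el.induct)
  case (3 a b r)
  then have "norm (a - b) \<le> e" "el (b#r) \<le> e * real (length (b#r) - 1)"
    by (auto simp: eps_path_Cons2 eps_adj_def)
  then show ?case by (simp add: algebra_simps)
qed auto

lemma okw_path: "okw e V w \<Longrightarrow> \<exists>p. eps_path e V p \<and> hd p = hd w \<and> last p = last w \<and> length p \<le> length w"
proof (induction w rule: okw.induct)
  case (2 e V a)
  then show ?case by (intro exI[of _ "[a]"]) (simp add: eps_path_single)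
next
  case (3 e V a b r)
  then obtain p where p: "eps_path e V p" "hd p = b" "last p = last (b#r)" "length p \<le> length (b#r)" by auto
  have pne: "p \<noteq> []" using p(1) by (simp add: eps_path_def)
  show ?case
  proof (cases "a = b")
    case True then show ?thesis using p by (intro exI[of _ p]) auto
  next
    case False
    obtain t where pt: "p = b#t" using pne p(2) by (cases p) auto
    have "b \<in> V" using p(1) pt by (simp add: eps_path_def)
    then have "eps_adj e V a b" using 3(2) False by (simp add: eps_adj_def)
    then have "eps_path e V (a#p)" using pt p(1) by (simp add: eps_path_Cons2)
    then show ?thesis using p pne by (intro exI[of _ "a#p"]) auto
  qed
qed auto

lemma okw_short:
  assumes "e > 0"
  shows "okw e V w \<Longrightarrow> \<exists>w'. okw e V w' \<and> hd w' = hd w \<and> last w' = last w \<and>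
     real (length w' - 1) * e \<le> 2 * el w + e"
proof (induction w rule: length_induct)
  case (1 w)
  show ?case
  proof (cases "length w \<le> 2")
    case True
    then have "real (length w - 1) \<le> 1" by simp
    then have "real (length w - 1) * e \<le> e" using assms by (simp add: mult_left_le_one_le)
    then show ?thesis using 1(2) el_nonneg[of w]
      by (intro exI[of _ w]) auto
  next
    case False
    then have "length w \<ge> 3" by simp
    then obtain a b c r where w: "w = a#b#c#r"
    proof -
      obtain a t where "w = a#t" using \<open>length w \<ge> 3\<close> by (cases w) auto
      moreover obtain b t2 where "t = b#t2" using \<open>length w \<ge> 3\<close> \<open>w = a#t\<close> by (cases t) auto
      moreover obtain c r where "t2 = c#r" using \<open>length w \<ge> 3\<close> \<open>w = a#t\<close> \<open>t = b#t2\<close> by (cases t2) auto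
      ultimately show ?thesis using that by blast
    qed
    have elw: "el w = norm (a - b) + norm (b - c) + el (c#r)" using w by simp
    have tri: "norm (a - c) \<le> norm (a - b) + norm (b - c)"
      using norm_triangle_ineq[of "a - b" "b - c"] by simp
    have okall: "a \<in> V" "norm (a - b) \<le> e" "b \<in> V" "norm (b - c) \<le> e" "okw e V (c#r)"
      using 1(2) unfolding w by simp_all
    show ?thesis
    proof (cases "norm (a - c) \<le> e")
      case True
      have ok: "okw e V (a#c#r)" using okall True by simp
      have lt: "length (a#c#r) < length w" using w by simp
      obtain w' where w': "okw e V w'" "hd w' = a" "last w' = last (a#c#r)"
        "real (length w' - 1) * e \<le> 2 * el (a#c#r) + e"
        using 1(1)[rule_format, OF lt ok] by auto
      have "el (a#c#r) = norm (a - c) + el (c#r)" by simp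
      then have "real (length w' - 1) * e \<le> 2 * el w + e" using w'(4) tri elw by linarith
      moreover have "last w' = last w" using w'(3) w by simp
      moreover have "hd w' = hd w" using w'(2) w by simp
      ultimately show ?thesis using w'(1) by blast
    next
      case False
      have lt: "length (c#r) < length w" using w by simp
      obtain w' where w': "okw e V w'" "hd w' = c" "last w' = last (c#r)"
        "real (length w' - 1) * e \<le> 2 * el (c#r) + e"
        using 1(1)[rule_format, OF lt okall(5)] by auto
      obtain t where wt: "w' = c # t" using w'(1,2) by (cases w') auto
      have okn: "okw e V (a#b#w')" using okall w'(1) wt by simp
      have "real (length (a#b#w') - 1) = real (length w' - 1) + 2" using wt by simp
      then have "real (length (a#b#w') - 1) * e = real (length w' - 1) * e + 2 * e" by (metis distrib_right)
      also have "\<dots> \<le> 2 * el w + e" using w'(4) tri False elw by linarith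
      finally have "real (length (a#b#w') - 1) * e \<le> 2 * el w + e" .
      moreover have "last (a#b#w') = last w" using w'(3) w wt by simp
      moreover have "hd (a#b#w') = hd w" using w by simp
      ultimately show ?thesis using okn by blast
    qed
  qed
qed

theorem mainTheorem7:
  fixes V :: "(real ^ 'k) set" and eps :: real and x y :: "real ^ 'k"
  assumes "finite V" and "eps > 0" and "eps_graph_connected eps V"
    and "x \<in> V" and "y \<in> V"
  shows "1/4 * eps * (real (d_SP eps V x y) - 1) \<le> d_E eps V x y
       \<and> d_E eps V x y \<le> eps * real (d_SP eps V x y)"
proof
  let ?P = "eps_paths eps V x y"
  have ne: "?P \<noteq> {}" using assms unfolding eps_graph_connected_def by blast
  have bdd: "bdd_below (path_eucl_len ` ?P)"
    by (rule bdd_belowI[of _ 0]) (auto simp: eucl_el el_nonneg)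
  have bddn: "bdd_below (path_len ` ?P)" by (rule bdd_belowI[of _ 0]) auto
  show "1/4 * eps * (real (d_SP eps V x y) - 1) \<le> d_E eps V x y"
    unfolding d_E_def
  proof (rule cINF_greatest[OF ne])
    fix p assume pP: "p \<in> ?P"
    then have pp: "eps_path eps V p" "hd p = x" "last p = y" by (auto simp: eps_paths_def)
    obtain w' where w': "okw eps V w'" "hd w' = x" "last w' = y"
      "real (length w' - 1) * eps \<le> 2 * el p + eps"
      using okw_short[OF assms(2) path_okw[OF pp(1)]] pp by auto
    obtain q where q: "eps_path eps V q" "hd q = x" "last q = y" "length q \<le> length w'"
      using okw_path[OF w'(1)] w' by auto
    have "q \<in> ?P" using q by (simp add: eps_paths_def)
    then have "d_SP eps V x y \<le> path_len q" unfolding d_SP_def by (rule cINF_lower[OF bddn])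
    then have "d_SP eps V x y \<le> length w' - 1" using q(4) by (simp add: path_len_def)
    then have "real (d_SP eps V x y) * eps \<le> real (length w' - 1) * eps"
      using assms(2) by (simp add: mult_right_mono)
    then have "eps * (real (d_SP eps V x y) - 1) \<le> 2 * el p" using w'(4) by (simp add: algebra_simps)
    then show "1/4 * eps * (real (d_SP eps V x y) - 1) \<le> path_eucl_len p"
      using el_nonneg[of p] by (simp add: eucl_el)
  qed
  have "d_SP eps V x y \<in> path_len ` ?P" unfolding d_SP_def
    using ne by (intro Inf_nat_def1) auto
  then obtain p where pP: "p \<in> ?P" and pl: "path_len p = d_SP eps V x y" by auto
  have "d_E eps V x y \<le> path_eucl_len p" unfolding d_E_def by (rule cINF_lower[OF bdd pP])
  also have "\<dots> \<le> eps * real (path_len p)"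
    using pP path_el[of eps V p] by (simp add: eps_paths_def eucl_el path_len_def)
  finally show "d_E eps V x y \<le> eps * real (d_SP eps V x y)" using pl by simp
qed

end
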